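(* Let $\mathbb{G}$ be a $b$-bounded concurrent game system and $\pi$ a strategy profile given by probabilistic transducers. If $\pi$ is not a subgame perfect equilibrium in $\mathbb{G}$, then there exist an agent $i$, a state $v^*=\langle v,s,n\rangle$ of $\mathbb{G}\times\pi$ with $i\in P(v)$, and an action $a\in A_i$ such that (1) $v^*\in R$ (the set of relevant history-reachable states for agent $i$), and (2) in the Markov chain $\mathbb{G}\times\pi'$ obtained from $\mathbb{G}\times\pi$ by changing only the outgoing transition probabilities of $v^*$, namely by replacing the distribution $O_i(s^i,v)$ of agent $i$ with the point mass on $a$ (all other agents' outputs unchanged), the probability of reaching $T=\{\langle v',s',n'\rangle : v'\in G_i\}$ from $v^*$ is strictly larger than in $\mathbb{G}\times\pi$.
   Context: Fix a constant $b\ge 1$. A $b$-bounded concurrent game system is a tuple $\mathbb{G}=\langle V,v_0,\Omega,A,P,\delta,\mathbb{L},G,F\rangle$ where: $V$ is a finite set of states with initial state $v_0$; $\Omega=\{1,\dots,k\}$ is the set of agents; $A_i$ is the finite action set of agent $i$, $\Theta_W=\prod_{i\in W}A_i$; $P:V\to 2^\Omega$ with $|P(v)|\le b$; $\delta(v,\theta,v')\in[0,1]$ for $\theta\in\Theta_{P(v)}$ with $\sum_{v'}\delta(v,\theta,v')=1$, all probabilities binary fractions of exactly $\mathbb{L}$ bits; $G_i\subseteq V$ is agent $i$'s reachability goal; $F\in\mathbb{N}$ is a horizon. A play starts at $v_0$; at each state $v$ the agents in $P(v)$ choose actions from their current distributions, and the next state is sampled from $\delta$; the play visits $F$ states in total.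 Agent $i$'s payoff from a play is $1$ if it visits $G_i$ and $0$ otherwise; $p(\pi,i)$ is the expected payoff under profile $\pi$. A strategy of agent $i$ is any function $V^+\to\mathbb{D}(A_i)$; input strategies are given by probabilistic transducers $\langle S_i,s_0^i,V,\gamma^i,O_i\rangle$ (finite $S_i$, deterministic $\gamma^i:S_i\times V\to S_i$, $O_i:S_i\times V\to\mathbb{D}(A_i)$). The product transducer of $\pi$ has states $S=\prod_iS_i$, initial state $s_0$, componentwise transitions $\gamma$, and output $O(s,v)$ = product distribution of $O_j(s^j,v)$, $j\in P(v)$. A Nash equilibrium is a profile $\pi$ such that for every agent $i$ and every strategy $\pi'_i$, replacing $\pi_i$ by $\pi'_i$ does not increase $p(\cdot,i)$. A history is $h\in V^+$ starting at $v_0$, with $|h|\le F$, such that consecutive states $h[j],h[j+1]$ satisfy $\delta(h[j],\theta,h[j+1])>0$ for some $\theta$. The substrategy is $\pi_i|_h(w)=\pi_i(h\cdot w)$; the subgame $\mathbb{G}|_h$ starts at the last state of $h$ with horizon $F-|h|$, and agents whose goal was visited in $h$ get payoff $1$. $\pi$ is a subgame perfect equilibrium iff for every history $h$, $\pi|_h=\langle\pi_1|_h,\dots,\pi_k|_h\rangle$ is a Nash equilibrium in $\mathbb{G}|_h$. The Markov chain $\mathbb{G}\times\pi$ has states $V\times S\times[F]$ and transition probability from $\langle v_1,s_1,n_1\rangle$ to $\langle v_2,s_2,n_2\rangle$ equal to $p_vp_sp_n$, where $p_s=[s_2=\gamma(s_1,v_1)]$, $p_n=[n_2=n_1+1]$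 (no outgoing transitions when $n_1=F$), and $p_v=\sum_\theta\Pr[O(s_1,v_1)=\theta]\,\delta(v_1,\theta,v_2)$. A state $r$ is in $R$ (for agent $i$) iff there is a path $\langle v_0,s_0,1\rangle=x_1,\dots,x_m=r$, $x_j=\langle v'_j,s'_j,n_j\rangle$, with $\gamma(s'_j,v'_j)=s'_{j+1}$, $n_{j+1}=n_j+1$, $\delta(v'_j,\theta,v'_{j+1})>0$ for some $\theta\in\Theta_{P(v'_j)}$, and $v'_j\notin G_i$ for all $j$. *)

theory Defs
  imports "HOL-Probability.Probability_Mass_Function"
begin

text \<open>Agents are the naturals 1..k. A joint action of the agents in W is a
  function theta in PiE W A. States of the game form the finite type 'v (V = UNIV).\<close>

definition jprob :: "nat set \<Rightarrow> (nat \<Rightarrow> 'a pmf) \<Rightarrow> (nat \<Rightarrow> 'a) \<Rightarrow> real" where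
  "jprob W d \<theta> = (\<Prod>j\<in>W. pmf (d j) (\<theta> j))"

definition bounded_cgs ::
  "nat \<Rightarrow> nat \<Rightarrow> (nat \<Rightarrow> 'a set) \<Rightarrow> ('v::finite \<Rightarrow> nat set) \<Rightarrow>
   ('v \<Rightarrow> (nat \<Rightarrow> 'a) \<Rightarrow> 'v \<Rightarrow> real) \<Rightarrow> nat \<Rightarrow> bool" where
  "bounded_cgs b k A P \<delta> L \<longleftrightarrow>
     b \<ge> 1 \<and>
     (\<forall>i\<in>{1..k}. finite (A i)) \<and>
     (\<forall>v. P v \<subseteq> {1..k} \<and> card (P v) \<le> b) \<and>
     (\<forall>v \<theta>. \<theta> \<in> PiE (P v) A \<longrightarrow>
        (\<forall>v'. 0 \<le> \<delta> v \<theta> v' \<and> \<delta> v \<theta> v' \<le> 1 \<and>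
              (\<exists>m::nat. \<delta> v \<theta> v' = real m / 2 ^ L)) \<and>
        (\<Sum>v'\<in>UNIV. \<delta> v \<theta> v') = 1)"

text \<open>Probability that agent i's goal is visited, given current history h and
  n further states still to be visited, under a profile of general strategies
  sigma j :: 'v list => 'a pmf.\<close>

fun reachv :: "('v::finite \<Rightarrow> nat set) \<Rightarrow> (nat \<Rightarrow> 'a set) \<Rightarrow> ('v \<Rightarrow> (nat \<Rightarrow> 'a) \<Rightarrow> 'v \<Rightarrow> real)
   \<Rightarrow> (nat \<Rightarrow> 'v set) \<Rightarrow> (nat \<Rightarrow> 'v list \<Rightarrow> 'a pmf) \<Rightarrow> nat \<Rightarrow> 'v list \<Rightarrow> nat \<Rightarrow> real" where
  "reachv P A \<delta> G \<sigma> i h 0 = (if set h \<inter> G i \<noteq> {} then 1 else 0)"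
| "reachv P A \<delta> G \<sigma> i h (Suc n) = (if set h \<inter> G i \<noteq> {} then 1 else
     (\<Sum>\<theta>\<in>PiE (P (last h)) A. jprob (P (last h)) (\<lambda>j. \<sigma> j h) \<theta> *
        (\<Sum>v'\<in>UNIV. \<delta> (last h) \<theta> v' * reachv P A \<delta> G \<sigma> i (h @ [v']) n)))"

definition is_strategy :: "(nat \<Rightarrow> 'a set) \<Rightarrow> nat \<Rightarrow> ('v list \<Rightarrow> 'a pmf) \<Rightarrow> bool" where
  "is_strategy A i s \<longleftrightarrow> (\<forall>w. set_pmf (s w) \<subseteq> A i)"

definition is_history :: "('v \<Rightarrow> nat set) \<Rightarrow> (nat \<Rightarrow> 'a set) \<Rightarrow> ('v \<Rightarrow> (nat \<Rightarrow> 'a) \<Rightarrow> 'v \<Rightarrow> real)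
   \<Rightarrow> 'v \<Rightarrow> nat \<Rightarrow> 'v list \<Rightarrow> bool" where
  "is_history P A \<delta> v0 F h \<longleftrightarrow> h \<noteq> [] \<and> hd h = v0 \<and> length h \<le> F \<and>
     (\<forall>j. j + 1 < length h \<longrightarrow> (\<exists>\<theta>\<in>PiE (P (h ! j)) A. \<delta> (h ! j) \<theta> (h ! (j + 1)) > 0))"

text \<open>Substrategy: pi_i|_h (w) = pi_i (h . w), where the subgame history w starts
  at the last state of h (which is therefore not repeated).\<close>
definition substrat :: "(nat \<Rightarrow> 'v list \<Rightarrow> 'a pmf) \<Rightarrow> 'v list \<Rightarrow> nat \<Rightarrow> 'v list \<Rightarrow> 'a pmf" where
  "substrat \<sigma> h = (\<lambda>j w. \<sigma> j (butlast h @ w))"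

definition subval :: "('v::finite \<Rightarrow> nat set) \<Rightarrow> (nat \<Rightarrow> 'a set) \<Rightarrow> ('v \<Rightarrow> (nat \<Rightarrow> 'a) \<Rightarrow> 'v \<Rightarrow> real)
   \<Rightarrow> (nat \<Rightarrow> 'v set) \<Rightarrow> nat \<Rightarrow> 'v list \<Rightarrow> (nat \<Rightarrow> 'v list \<Rightarrow> 'a pmf) \<Rightarrow> nat \<Rightarrow> real" where
  "subval P A \<delta> G F h \<tau> i =
     (if set h \<inter> G i \<noteq> {} then 1 else reachv P A \<delta> G \<tau> i [last h] (F - length h))"

definition is_NE_sub :: "nat \<Rightarrow> ('v::finite \<Rightarrow> nat set) \<Rightarrow> (nat \<Rightarrow> 'a set) \<Rightarrow> ('v \<Rightarrow> (nat \<Rightarrow> 'a) \<Rightarrow> 'v \<Rightarrow> real)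
   \<Rightarrow> (nat \<Rightarrow> 'v set) \<Rightarrow> nat \<Rightarrow> 'v list \<Rightarrow> (nat \<Rightarrow> 'v list \<Rightarrow> 'a pmf) \<Rightarrow> bool" where
  "is_NE_sub k P A \<delta> G F h \<tau> \<longleftrightarrow>
     (\<forall>i\<in>{1..k}. \<forall>\<tau>'. is_strategy A i \<tau>' \<longrightarrow>
        subval P A \<delta> G F h (\<tau>(i := \<tau>')) i \<le> subval P A \<delta> G F h \<tau> i)"

definition is_SPE :: "nat \<Rightarrow> ('v::finite \<Rightarrow> nat set) \<Rightarrow> (nat \<Rightarrow> 'a set) \<Rightarrow> ('v \<Rightarrow> (nat \<Rightarrow> 'a) \<Rightarrow> 'v \<Rightarrow> real)
   \<Rightarrow> (nat \<Rightarrow> 'v set) \<Rightarrow> 'v \<Rightarrow> nat \<Rightarrow> (nat \<Rightarrow> 'v list \<Rightarrow> 'a pmf) \<Rightarrow> bool" where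
  "is_SPE k P A \<delta> G v0 F \<sigma> \<longleftrightarrow>
     (\<forall>h. is_history P A \<delta> v0 F h \<longrightarrow> is_NE_sub k P A \<delta> G F h (substrat \<sigma> h))"

definition transducers :: "nat \<Rightarrow> (nat \<Rightarrow> 'a set) \<Rightarrow> (nat \<Rightarrow> 's set) \<Rightarrow> (nat \<Rightarrow> 's)
   \<Rightarrow> (nat \<Rightarrow> 's \<Rightarrow> 'v \<Rightarrow> 's) \<Rightarrow> (nat \<Rightarrow> 's \<Rightarrow> 'v \<Rightarrow> 'a pmf) \<Rightarrow> bool" where
  "transducers k A S s0 \<gamma> Out \<longleftrightarrow>
     (\<forall>i\<in>{1..k}. finite (S i) \<and> s0 i \<in> S i \<and>
        (\<forall>s\<in>S i. \<forall>v. \<gamma> i s v \<in> S i \<and> set_pmf (Out i s v) \<subseteq> A i))"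

text \<open>The strategy computed by a transducer: after reading v_0 .. v_{m-1} it is in
  state s and outputs Out(s, v_m).\<close>
definition tstrat :: "(nat \<Rightarrow> 's) \<Rightarrow> (nat \<Rightarrow> 's \<Rightarrow> 'v \<Rightarrow> 's) \<Rightarrow> (nat \<Rightarrow> 's \<Rightarrow> 'v \<Rightarrow> 'a pmf)
   \<Rightarrow> nat \<Rightarrow> 'v list \<Rightarrow> 'a pmf" where
  "tstrat s0 \<gamma> Out j h = Out j (foldl (\<gamma> j) (s0 j) (butlast h)) (last h)"

definition pgamma :: "nat \<Rightarrow> (nat \<Rightarrow> 's \<Rightarrow> 'v \<Rightarrow> 's) \<Rightarrow> (nat \<Rightarrow> 's) \<Rightarrow> 'v \<Rightarrow> (nat \<Rightarrow> 's)" where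
  "pgamma k \<gamma> s v = restrict (\<lambda>j. \<gamma> j (s j) v) {1..k}"

type_synonym ('v, 's) mcstate = "'v \<times> (nat \<Rightarrow> 's) \<times> nat"

definition mc_states :: "nat \<Rightarrow> (nat \<Rightarrow> 's set) \<Rightarrow> nat \<Rightarrow> ('v, 's) mcstate set" where
  "mc_states k S F = UNIV \<times> PiE {1..k} S \<times> {1..F}"

definition pv :: "('v \<Rightarrow> nat set) \<Rightarrow> (nat \<Rightarrow> 'a set) \<Rightarrow> ('v \<Rightarrow> (nat \<Rightarrow> 'a) \<Rightarrow> 'v \<Rightarrow> real)
   \<Rightarrow> (nat \<Rightarrow> 'a pmf) \<Rightarrow> 'v \<Rightarrow> 'v \<Rightarrow> real" where
  "pv P A \<delta> out v1 v2 = (\<Sum>\<theta>\<in>PiE (P v1) A. jprob (P v1) out \<theta> * \<delta> v1 \<theta> v2)"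

definition gen_trans :: "nat \<Rightarrow> ('v \<Rightarrow> nat set) \<Rightarrow> (nat \<Rightarrow> 'a set) \<Rightarrow> ('v \<Rightarrow> (nat \<Rightarrow> 'a) \<Rightarrow> 'v \<Rightarrow> real)
   \<Rightarrow> (nat \<Rightarrow> 's \<Rightarrow> 'v \<Rightarrow> 's) \<Rightarrow> nat \<Rightarrow> (('v, 's) mcstate \<Rightarrow> nat \<Rightarrow> 'a pmf)
   \<Rightarrow> ('v, 's) mcstate \<Rightarrow> ('v, 's) mcstate \<Rightarrow> real" where
  "gen_trans k P A \<delta> \<gamma> F outf x y =
     (case x of (v1, s1, n1) \<Rightarrow> case y of (v2, s2, n2) \<Rightarrow>
        if n1 = F then 0 else
        pv P A \<delta> (outf x) v1 v2 * (if s2 = pgamma k \<gamma> s1 v1 then 1 else 0)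
          * (if n2 = n1 + 1 then 1 else 0))"

definition out_pi :: "(nat \<Rightarrow> 's \<Rightarrow> 'v \<Rightarrow> 'a pmf) \<Rightarrow> ('v, 's) mcstate \<Rightarrow> nat \<Rightarrow> 'a pmf" where
  "out_pi Out x = (case x of (v, s, n) \<Rightarrow> (\<lambda>j. Out j (s j) v))"

definition out_mod :: "(nat \<Rightarrow> 's \<Rightarrow> 'v \<Rightarrow> 'a pmf) \<Rightarrow> nat \<Rightarrow> 'a \<Rightarrow> ('v, 's) mcstate
   \<Rightarrow> ('v, 's) mcstate \<Rightarrow> nat \<Rightarrow> 'a pmf" where
  "out_mod Out i a xs x = (if x = xs then (out_pi Out x)(i := return_pmf a) else out_pi Out x)"

fun mc_reach :: "'x set \<Rightarrow> ('x \<Rightarrow> 'x \<Rightarrow> real) \<Rightarrow> 'x set \<Rightarrow> nat \<Rightarrow> 'x \<Rightarrow> real" where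
  "mc_reach X M T 0 x = (if x \<in> T then 1 else 0)"
| "mc_reach X M T (Suc n) x = (if x \<in> T then 1 else (\<Sum>y\<in>X. M x y * mc_reach X M T n y))"

text \<open>The chain G x pi has horizon F (the counter strictly increases and there are no
  transitions out of counter value F), so reaching within F steps is reaching at all.\<close>
definition reach_prob :: "nat \<Rightarrow> (nat \<Rightarrow> 's set) \<Rightarrow> nat \<Rightarrow> (('v, 's) mcstate \<Rightarrow> ('v, 's) mcstate \<Rightarrow> real)
   \<Rightarrow> ('v, 's) mcstate set \<Rightarrow> ('v, 's) mcstate \<Rightarrow> real" where
  "reach_prob k S F M T x = mc_reach (mc_states k S F) M T F x"

definition goal_states :: "(nat \<Rightarrow> 'v set) \<Rightarrow> nat \<Rightarrow> ('v, 's) mcstate set" where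
  "goal_states G i = {(v', s', n'). v' \<in> G i}"

inductive_set Rset :: "nat \<Rightarrow> ('v \<Rightarrow> nat set) \<Rightarrow> (nat \<Rightarrow> 'a set) \<Rightarrow> ('v \<Rightarrow> (nat \<Rightarrow> 'a) \<Rightarrow> 'v \<Rightarrow> real)
   \<Rightarrow> (nat \<Rightarrow> 'v set) \<Rightarrow> (nat \<Rightarrow> 's) \<Rightarrow> (nat \<Rightarrow> 's \<Rightarrow> 'v \<Rightarrow> 's) \<Rightarrow> 'v \<Rightarrow> nat \<Rightarrow> ('v, 's) mcstate set"
  for k P A \<delta> G s0 \<gamma> v0 i where
  base: "v0 \<notin> G i \<Longrightarrow> (v0, restrict s0 {1..k}, 1) \<in> Rset k P A \<delta> G s0 \<gamma> v0 i"
| step: "(v, s, n) \<in> Rset k P A \<delta> G s0 \<gamma> v0 i \<Longrightarrow> \<theta> \<in> PiE (P v) A \<Longrightarrow> \<delta> v \<theta> v' > 0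
          \<Longrightarrow> v' \<notin> G i \<Longrightarrow> (v', pgamma k \<gamma> s v, n + 1) \<in> Rset k P A \<delta> G s0 \<gamma> v0 i"

end

theory Submission
  imports Defs
begin

lemma gt_nz:
  assumes "y \<in> mc_states k S F" "gen_trans k P A \<delta> \<gamma> F outf (v,s,n) y \<noteq> 0"
  shows "n < F \<and> y = (fst y, pgamma k \<gamma> s v, n+1)"
proof -
  obtain v2 s2 n2 where y: "y = (v2,s2,n2)" by (cases y) auto
  from assms y show ?thesis
    by (auto simp: gen_trans_def mc_states_def split: if_splits)
qed

lemma sum_cong_nz: "(\<And>y. y\<in>X \<Longrightarrow> M y \<noteq> 0 \<Longrightarrow> f y = g y) \<Longrightarrow> (\<Sum>y\<in>X. M y * f y) = (\<Sum>y\<in>X. M y * (g y::real))"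
  by (rule sum.cong) auto

lemma stab:
  "F - n \<le> m \<Longrightarrow> mc_reach (mc_states k S F) (gen_trans k P A \<delta> \<gamma> F outf) T (Suc m) (v,s,n)
     = mc_reach (mc_states k S F) (gen_trans k P A \<delta> \<gamma> F outf) T m (v,s,n)"
proof (induction m arbitrary: v s n)
  case 0
  have "(\<Sum>y\<in>mc_states k S F. gen_trans k P A \<delta> \<gamma> F outf (v,s,n) y *
          mc_reach (mc_states k S F) (gen_trans k P A \<delta> \<gamma> F outf) T 0 y) = 0"
    using 0 gt_nz by (intro sum.neutral) fastforce
  then show ?case by simp
next
  case (Suc m)
  have "(\<Sum>y\<in>mc_states k S F. gen_trans k P A \<delta> \<gamma> F outf (v,s,n) y *
          mc_reach (mc_states k S F) (gen_trans k P A \<delta> \<gamma> F outf) T (Suc m) y) =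
        (\<Sum>y\<in>mc_states k S F. gen_trans k P A \<delta> \<gamma> F outf (v,s,n) y *
          mc_reach (mc_states k S F) (gen_trans k P A \<delta> \<gamma> F outf) T m y)"
  proof (rule sum_cong_nz)
    fix y assume y: "y \<in> mc_states k S F" and nz: "gen_trans k P A \<delta> \<gamma> F outf (v,s,n) y \<noteq> 0"
    from gt_nz[OF y nz] have "y = (fst y, pgamma k \<gamma> s v, n+1)" by blast
    moreover have "F - (n+1) \<le> m" using Suc.prems by simp
    ultimately show "mc_reach (mc_states k S F) (gen_trans k P A \<delta> \<gamma> F outf) T (Suc m) y =
          mc_reach (mc_states k S F) (gen_trans k P A \<delta> \<gamma> F outf) T m y" using Suc.IH by metis
  qed
  then show ?case by simp
qed

lemma mod_eq:
  "n0 < n \<Longrightarrow> mc_reach (mc_states k S F) (gen_trans k P A \<delta> \<gamma> F (out_mod Out i a (vx,sx,n0))) T m (v,s,n)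
     = mc_reach (mc_states k S F) (gen_trans k P A \<delta> \<gamma> F (out_pi Out)) T m (v,s,n)"
proof (induction m arbitrary: v s n)
  case 0
  then show ?case by simp
next
  case (Suc m)
  have ne: "(v,s,n) \<noteq> (vx,sx,n0)" using Suc.prems by auto
  have eqM: "gen_trans k P A \<delta> \<gamma> F (out_mod Out i a (vx,sx,n0)) (v,s,n) =
             gen_trans k P A \<delta> \<gamma> F (out_pi Out) (v,s,n)"
  proof -
    have h1: "out_mod Out i a (vx,sx,n0) (v,s,n) = out_pi Out (v,s,n)" using ne unfolding out_mod_def by auto
    show ?thesis unfolding gen_trans_def h1 by (rule refl)
  qed
  have "(\<Sum>y\<in>mc_states k S F. gen_trans k P A \<delta> \<gamma> F (out_pi Out) (v,s,n) y *
          mc_reach (mc_states k S F) (gen_trans k P A \<delta> \<gamma> F (out_mod Out i a (vx,sx,n0))) T m y) =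
        (\<Sum>y\<in>mc_states k S F. gen_trans k P A \<delta> \<gamma> F (out_pi Out) (v,s,n) y *
          mc_reach (mc_states k S F) (gen_trans k P A \<delta> \<gamma> F (out_pi Out)) T m y)"
  proof (rule sum_cong_nz)
    fix y assume y: "y \<in> mc_states k S F" and nz: "gen_trans k P A \<delta> \<gamma> F (out_pi Out) (v,s,n) y \<noteq> 0"
    from gt_nz[OF y nz] have "y = (fst y, pgamma k \<gamma> s v, n+1)" by blast
    moreover have "n0 < n+1" using Suc.prems by simp
    ultimately show "mc_reach (mc_states k S F) (gen_trans k P A \<delta> \<gamma> F (out_mod Out i a (vx,sx,n0))) T m y =
          mc_reach (mc_states k S F) (gen_trans k P A \<delta> \<gamma> F (out_pi Out)) T m y" using Suc.IH by metis
  qed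
  then show ?case by (simp add: eqM)
qed

lemma mc_reach_T: "x \<in> T \<Longrightarrow> mc_reach X M T m x = 1"
  by (cases m) auto

lemma reachv_goal: "set h \<inter> G i \<noteq> {} \<Longrightarrow> reachv P A \<delta> G \<sigma> i h m = 1"
  by (cases m) auto

lemma sof_comp: "j \<in> {1..k} \<Longrightarrow> foldl (pgamma k \<gamma>) (restrict s0 {1..k}) u j = foldl (\<gamma> j) (s0 j) u"
  by (induction u rule: rev_induct) (auto simp: pgamma_def)

lemma sof_PiE:
  assumes "transducers k A S s0 \<gamma> Out"
  shows "foldl (pgamma k \<gamma>) (restrict s0 {1..k}) u \<in> PiE {1..k} S"
  using assms
  by (induction u rule: rev_induct) (auto simp: pgamma_def transducers_def restrict_PiE_iff PiE_iff)

lemma foldl_snoc: "w \<noteq> [] \<Longrightarrow> foldl f s (pre @ w) = f (foldl f s (pre @ butlast w)) (last w)"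
  by (metis append_assoc append_butlast_last_id foldl_Cons foldl_Nil foldl_append)

lemma unfold0:
  "(v,s,F) \<notin> T \<Longrightarrow> mc_reach (mc_states k S F) (gen_trans k P A \<delta> \<gamma> F outf) T F (v,s,F) = 0"
proof (cases F)
  case (Suc F')
  assume nT: "(v,s,F) \<notin> T"
  have "(\<Sum>y\<in>mc_states k S F. gen_trans k P A \<delta> \<gamma> F outf (v,s,F) y *
          mc_reach (mc_states k S F) (gen_trans k P A \<delta> \<gamma> F outf) T F' y) = 0"
    using gt_nz by (intro sum.neutral) fastforce
  then show ?thesis using nT Suc by simp
qed simp

lemma unfold_step:
  fixes v :: "'v::finite" and s :: "nat \<Rightarrow> 's"
  assumes FS: "\<forall>j\<in>{1..k}. finite (S j)" and pres: "\<forall>j\<in>{1..k}. \<forall>s\<in>S j. \<forall>v. \<gamma> j s v \<in> S j"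
    and s: "s \<in> PiE {1..k} S" and n: "n < F" and nT: "(v,s,n) \<notin> T"
  shows "mc_reach (mc_states k S F) (gen_trans k P A \<delta> \<gamma> F outf) T F (v,s,n) =
    (\<Sum>\<theta>\<in>PiE (P v) A. jprob (P v) (outf (v,s,n)) \<theta> *
        (\<Sum>v2\<in>UNIV. \<delta> v \<theta> v2 * mc_reach (mc_states k S F) (gen_trans k P A \<delta> \<gamma> F outf) T F (v2, pgamma k \<gamma> s v, n+1)))"
proof -
  obtain F' where F: "F = Suc F'" using n by (cases F) auto
  define X where "X = (mc_states k S F :: ('v,'s) mcstate set)"
  define M where "M = gen_trans k P A \<delta> \<gamma> F outf"
  define ps where "ps = pgamma k \<gamma> s v"
  define x where "x = (v,s,n)"
  have ps: "ps \<in> PiE {1..k} S"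
    using s pres unfolding ps_def pgamma_def restrict_PiE_iff by (auto simp: PiE_iff)
  have finX: "finite X" unfolding X_def mc_states_def
    using FS by (intro finite_cartesian_product finite_PiE) auto
  have sub: "range (\<lambda>v2. (v2, ps, n+1)) \<subseteq> X" using ps n unfolding X_def mc_states_def by auto
  have "mc_reach X M T F x = (\<Sum>y\<in>X. M x y * mc_reach X M T F' y)" using nT F x_def by simp
  also have "\<dots> = (\<Sum>y\<in>range (\<lambda>v2. (v2, ps, n+1)). M x y * mc_reach X M T F' y)"
  proof (rule sum.mono_neutral_right[OF finX sub], rule ballI)
    fix y assume y: "y \<in> X - range (\<lambda>v2. (v2, ps, n+1))"
    show "M x y * mc_reach X M T F' y = 0"
    proof (cases "M x y = 0")
      case False
      with gt_nz[of y k S F P A \<delta> \<gamma> outf v s n] y have "y = (fst y, ps, n+1)"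
        unfolding X_def M_def x_def ps_def by blast
      with y show ?thesis by (metis DiffD2 rangeI)
    qed simp
  qed
  also have "\<dots> = (\<Sum>v2\<in>UNIV. M x (v2, ps, n+1) * mc_reach X M T F' (v2, ps, n+1))"
    by (subst sum.reindex) (auto simp: inj_on_def)
  also have "\<dots> = (\<Sum>v2\<in>UNIV. pv P A \<delta> (outf x) v v2 * mc_reach X M T F (v2, ps, n+1))"
  proof (rule sum.cong[OF refl])
    fix v2
    have "M x (v2, ps, n+1) = pv P A \<delta> (outf x) v v2"
      using n unfolding M_def x_def ps_def gen_trans_def by simp
    moreover have "mc_reach X M T F (v2, ps, n+1) = mc_reach X M T F' (v2, ps, n+1)"
      unfolding X_def M_def F by (rule stab) simp
    ultimately show "M x (v2, ps, n+1) * mc_reach X M T F' (v2, ps, n+1) =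
       pv P A \<delta> (outf x) v v2 * mc_reach X M T F (v2, ps, n+1)" by simp
  qed
  also have "\<dots> = (\<Sum>\<theta>\<in>PiE (P v) A. jprob (P v) (outf x) \<theta> *
        (\<Sum>v2\<in>UNIV. \<delta> v \<theta> v2 * mc_reach X M T F (v2, ps, n+1)))"
    unfolding pv_def sum_distrib_right sum_distrib_left
    by (subst sum.swap) (simp add: mult.assoc)
  finally show ?thesis unfolding X_def M_def x_def ps_def .
qed

lemma jprob_nonneg: "jprob W d \<theta> \<ge> 0"
  unfolding jprob_def by (intro prod_nonneg) auto

lemma jprob_split:
  assumes W: "finite W" "i \<in> W" and Ai: "finite (A i)"
  shows "(\<Sum>\<theta>\<in>PiE W A. jprob W (d(i:=q)) \<theta> * Y \<theta>) =
     (\<Sum>a\<in>A i. pmf q a * (\<Sum>\<theta>\<in>PiE W A. jprob W (d(i:=return_pmf a)) \<theta> * Y \<theta>))"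
proof -
  define R where "R \<theta> = (\<Prod>j\<in>W-{i}. pmf (d j) (\<theta> j))" for \<theta>
  have j1: "jprob W (d(i:=q)) \<theta> = pmf q (\<theta> i) * R \<theta>" for \<theta>
    unfolding jprob_def R_def using W by (subst prod.remove[of W i]) (auto intro!: prod.cong)
  have j2: "jprob W (d(i:=return_pmf a)) \<theta> = (if \<theta> i = a then 1 else 0) * R \<theta>" for \<theta> a
    unfolding jprob_def R_def using W by (subst prod.remove[of W i]) (auto intro!: prod.cong simp: indicator_def)
  have "(\<Sum>a\<in>A i. pmf q a * (\<Sum>\<theta>\<in>PiE W A. jprob W (d(i:=return_pmf a)) \<theta> * Y \<theta>)) =
        (\<Sum>\<theta>\<in>PiE W A. \<Sum>a\<in>A i. pmf q a * ((if \<theta> i = a then 1 else 0) * R \<theta> * Y \<theta>))"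
    unfolding j2 sum_distrib_left by (rule sum.swap)
  also have "\<dots> = (\<Sum>\<theta>\<in>PiE W A. pmf q (\<theta> i) * R \<theta> * Y \<theta>)"
  proof (rule sum.cong[OF refl])
    fix \<theta> assume "\<theta> \<in> PiE W A"
    then have "\<theta> i \<in> A i" using W by (auto simp: PiE_iff)
    then show "(\<Sum>a\<in>A i. pmf q a * ((if \<theta> i = a then 1 else 0) * R \<theta> * Y \<theta>)) = pmf q (\<theta> i) * R \<theta> * Y \<theta>"
    proof -
      have "(\<Sum>a\<in>A i. pmf q a * ((if \<theta> i = a then 1 else 0) * R \<theta> * Y \<theta>)) =
            (\<Sum>a\<in>A i. if a = \<theta> i then pmf q a * R \<theta> * Y \<theta> else 0)"
        by (rule sum.cong) auto
      also have "\<dots> = pmf q (\<theta> i) * R \<theta> * Y \<theta>" using Ai \<open>\<theta> i \<in> A i\<close> by (simp add: sum.delta)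
      finally show ?thesis .
    qed
  qed
  finally show ?thesis unfolding j1 by simp
qed

lemma hist_R:
  "u \<noteq> [] \<Longrightarrow> hd u = v0 \<Longrightarrow> (\<forall>j. j+1 < length u \<longrightarrow> (\<exists>\<theta>\<in>PiE (P (u!j)) A. \<delta> (u!j) \<theta> (u!(j+1)) > 0))
   \<Longrightarrow> set u \<inter> G i = {} \<Longrightarrow>
   (last u, foldl (pgamma k \<gamma>) (restrict s0 {1..k}) (butlast u), length u) \<in> Rset k P A \<delta> G s0 \<gamma> v0 i"
proof (induction u rule: rev_induct)
  case Nil
  then show ?case by simp
next
  case (snoc x xs)
  show ?case
  proof (cases "xs = []")
    case True
    have x: "x = v0" "v0 \<notin> G i" using snoc.prems True by auto
    have "(v0, restrict s0 {1..k}, 1) \<in> Rset k P A \<delta> G s0 \<gamma> v0 i" using x(2) by (rule Rset.base)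
    moreover have "last (xs@[x]) = v0" "butlast (xs@[x]) = []" "length (xs@[x]) = 1" using True x by auto
    ultimately show ?thesis by (simp only: foldl_Nil)
  next
    case False
    have IH: "(last xs, foldl (pgamma k \<gamma>) (restrict s0 {1..k}) (butlast xs), length xs) \<in> Rset k P A \<delta> G s0 \<gamma> v0 i"
    proof (rule snoc.IH[OF False])
      show "hd xs = v0" using snoc.prems False by simp
      show "set xs \<inter> G i = {}" using snoc.prems by auto
      show "\<forall>j. j+1 < length xs \<longrightarrow> (\<exists>\<theta>\<in>PiE (P (xs!j)) A. \<delta> (xs!j) \<theta> (xs!(j+1)) > 0)"
      proof (intro allI impI)
        fix j assume j: "j+1 < length xs"
        with snoc.prems(3)[rule_format, of j] show "\<exists>\<theta>\<in>PiE (P (xs!j)) A. \<delta> (xs!j) \<theta> (xs!(j+1)) > 0"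
          by (simp add: nth_append)
      qed
    qed
    have "\<exists>\<theta>\<in>PiE (P ((xs@[x])!(length xs - 1))) A. \<delta> ((xs@[x])!(length xs - 1)) \<theta> ((xs@[x])!(length xs - 1+1)) > 0"
      using snoc.prems(3) False by (metis Suc_eq_plus1 diff_Suc_1 length_append_singleton length_greater_0_conv lessI Suc_pred)
    moreover have "(xs@[x])!(length xs - 1) = last xs" using False by (simp add: nth_append last_conv_nth)
    moreover have "(xs@[x])!(length xs - 1+1) = x" using False by (simp add: nth_append)
    ultimately obtain \<theta> where th: "\<theta> \<in> PiE (P (last xs)) A" "\<delta> (last xs) \<theta> x > 0" by auto
    have xG: "x \<notin> G i" using snoc.prems by auto
    from Rset.step[OF IH th xG]
    have "(x, pgamma k \<gamma> (foldl (pgamma k \<gamma>) (restrict s0 {1..k}) (butlast xs)) (last xs), length xs + 1) \<in> Rset k P A \<delta> G s0 \<gamma> v0 i" .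
    moreover have "pgamma k \<gamma> (foldl (pgamma k \<gamma>) (restrict s0 {1..k}) (butlast xs)) (last xs) = foldl (pgamma k \<gamma>) (restrict s0 {1..k}) xs"
      using foldl_snoc[OF False, of "pgamma k \<gamma>" _ "[]"] by simp
    ultimately show ?thesis by (simp only: last_snoc butlast_snoc length_append_singleton Suc_eq_plus1)
  qed
qed

lemma trans_facts:
  assumes "transducers k A S s0 \<gamma> Out"
  shows "\<forall>j\<in>{1..k}. finite (S j)" "\<forall>j\<in>{1..k}. \<forall>s\<in>S j. \<forall>v. \<gamma> j s v \<in> S j"
  using assms unfolding transducers_def by auto

lemma rho_eq:
  assumes "w \<noteq> []" "j \<in> {1..k}"
  shows "tstrat s0 \<gamma> Out j (pre @ w) = Out j (foldl (pgamma k \<gamma>) (restrict s0 {1..k}) (pre @ butlast w) j) (last w)"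
proof -
  have "butlast (pre@w) = pre @ butlast w" "last (pre@w) = last w" using assms by (auto simp: butlast_append)
  then show ?thesis unfolding tstrat_def sof_comp[OF assms(2)] by simp
qed

lemma claimB:
  fixes pre :: "'v::finite list" and Out :: "nat \<Rightarrow> 's \<Rightarrow> 'v \<Rightarrow> 'a pmf"
  assumes trans: "transducers k A S s0 \<gamma> Out" and Pk: "\<forall>v. P v \<subseteq> {1..k}"
  shows "w \<noteq> [] \<Longrightarrow> set w \<inter> G i = {} \<Longrightarrow> length pre + length w + m = F \<Longrightarrow>
    reachv P A \<delta> G (\<lambda>j w'. tstrat s0 \<gamma> Out j (pre @ w')) i w m =
    mc_reach (mc_states k S F) (gen_trans k P A \<delta> \<gamma> F (out_pi Out)) (goal_states G i) F
      (last w, foldl (pgamma k \<gamma>) (restrict s0 {1..k}) (pre @ butlast w), length pre + length w)"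
proof (induction m arbitrary: w)
  case 0
  have "last w \<notin> G i" using 0 by (metis disjoint_iff last_in_set)
  then have "(last w, foldl (pgamma k \<gamma>) (restrict s0 {1..k}) (pre @ butlast w), F) \<notin> goal_states G i"
    by (simp add: goal_states_def)
  note nT = this
  have eq: "length pre + length w = F" using 0 by simp
  have r: "reachv P A \<delta> G (\<lambda>j w'. tstrat s0 \<gamma> Out j (pre @ w')) i w 0 = 0" using 0 by simp
  show ?case unfolding r eq by (rule sym[OF unfold0[OF nT]])
next
  case (Suc m)
  define v where "v = last w"
  define sw where "sw = foldl (pgamma k \<gamma>) (restrict s0 {1..k}) (pre @ butlast w)"
  define c where "c = length pre + length w"
  have vG: "v \<notin> G i" using Suc.prems unfolding v_def by (metis disjoint_iff last_in_set)
  have nT: "(v, sw, c) \<notin> goal_states G i" using vG by (simp add: goal_states_def)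
  have c: "c < F" using Suc.prems unfolding c_def by simp
  have sw: "sw \<in> PiE {1..k} S" unfolding sw_def by (rule sof_PiE[OF trans])
  have RHS: "mc_reach (mc_states k S F) (gen_trans k P A \<delta> \<gamma> F (out_pi Out)) (goal_states G i) F (v,sw,c) =
    (\<Sum>\<theta>\<in>PiE (P v) A. jprob (P v) (out_pi Out (v,sw,c)) \<theta> *
        (\<Sum>v2\<in>UNIV. \<delta> v \<theta> v2 * mc_reach (mc_states k S F) (gen_trans k P A \<delta> \<gamma> F (out_pi Out)) (goal_states G i) F (v2, pgamma k \<gamma> sw v, c+1)))"
    by (rule unfold_step[OF trans_facts[OF trans] sw c nT])
  have LHS: "reachv P A \<delta> G (\<lambda>j w'. tstrat s0 \<gamma> Out j (pre @ w')) i w (Suc m) =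
    (\<Sum>\<theta>\<in>PiE (P v) A. jprob (P v) (\<lambda>j. tstrat s0 \<gamma> Out j (pre @ w)) \<theta> *
        (\<Sum>v'\<in>UNIV. \<delta> v \<theta> v' * reachv P A \<delta> G (\<lambda>j w'. tstrat s0 \<gamma> Out j (pre @ w')) i (w @ [v']) m))"
    using Suc.prems unfolding v_def by simp
  have jp: "jprob (P v) (\<lambda>j. tstrat s0 \<gamma> Out j (pre @ w)) \<theta> = jprob (P v) (out_pi Out (v,sw,c)) \<theta>" for \<theta>
    unfolding jprob_def out_pi_def
  proof (intro prod.cong refl)
    fix j assume "j \<in> P v"
    then have j: "j \<in> {1..k}" using Pk by blast
    show "pmf (tstrat s0 \<gamma> Out j (pre @ w)) (\<theta> j) = pmf ((case (v, sw, c) of (v, s, n) \<Rightarrow> \<lambda>j. Out j (s j) v) j) (\<theta> j)"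
      using rho_eq[OF Suc.prems(1) j, of s0 \<gamma> Out pre] unfolding v_def sw_def by simp
  qed
  have inner: "reachv P A \<delta> G (\<lambda>j w'. tstrat s0 \<gamma> Out j (pre @ w')) i (w @ [v']) m =
     mc_reach (mc_states k S F) (gen_trans k P A \<delta> \<gamma> F (out_pi Out)) (goal_states G i) F (v', pgamma k \<gamma> sw v, c+1)" for v'
  proof (cases "v' \<in> G i")
    case True
    then show ?thesis by (simp add: reachv_goal mc_reach_T goal_states_def)
  next
    case False
    have "reachv P A \<delta> G (\<lambda>j w'. tstrat s0 \<gamma> Out j (pre @ w')) i (w @ [v']) m =
      mc_reach (mc_states k S F) (gen_trans k P A \<delta> \<gamma> F (out_pi Out)) (goal_states G i) F
      (last (w@[v']), foldl (pgamma k \<gamma>) (restrict s0 {1..k}) (pre @ butlast (w@[v'])), length pre + length (w@[v']))"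
      using Suc.prems False by (intro Suc.IH) auto
    moreover have "foldl (pgamma k \<gamma>) (restrict s0 {1..k}) (pre @ butlast (w@[v'])) = pgamma k \<gamma> sw v"
      using foldl_snoc[OF Suc.prems(1)] unfolding sw_def v_def by simp
    ultimately show ?thesis unfolding c_def by simp
  qed
  show ?case unfolding LHS jp inner
    unfolding v_def[symmetric] sw_def[symmetric] c_def[symmetric] by (rule RHS[symmetric])
qed

lemma claimA:
  fixes pre :: "'v::finite list" and Out :: "nat \<Rightarrow> 's \<Rightarrow> 'v \<Rightarrow> 'a pmf"
  assumes trans: "transducers k A S s0 \<gamma> Out" and Pk: "\<forall>v. P v \<subseteq> {1..k}"
    and Ai: "finite (A i)" and tau: "\<forall>w. set_pmf (\<tau>' w) \<subseteq> A i"
    and dnn: "\<forall>v \<theta> v'. \<theta> \<in> PiE (P v) A \<longrightarrow> 0 \<le> \<delta> v \<theta> v'"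
    and noimp: "\<forall>v s n a. (v,s,n) \<in> mc_states k S F \<longrightarrow> i \<in> P v \<longrightarrow> a \<in> A i \<longrightarrow>
        (v,s,n) \<in> Rset k P A \<delta> G s0 \<gamma> v0 i \<longrightarrow>
        mc_reach (mc_states k S F) (gen_trans k P A \<delta> \<gamma> F (out_mod Out i a (v,s,n))) (goal_states G i) F (v,s,n)
        \<le> mc_reach (mc_states k S F) (gen_trans k P A \<delta> \<gamma> F (out_pi Out)) (goal_states G i) F (v,s,n)"
  shows "w \<noteq> [] \<Longrightarrow> set w \<inter> G i = {} \<Longrightarrow> length pre + length w + m = F \<Longrightarrow>
    (last w, foldl (pgamma k \<gamma>) (restrict s0 {1..k}) (pre @ butlast w), length pre + length w) \<in> Rset k P A \<delta> G s0 \<gamma> v0 i \<Longrightarrow>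
    reachv P A \<delta> G ((\<lambda>j w'. tstrat s0 \<gamma> Out j (pre @ w'))(i := \<tau>')) i w m \<le>
    mc_reach (mc_states k S F) (gen_trans k P A \<delta> \<gamma> F (out_pi Out)) (goal_states G i) F
      (last w, foldl (pgamma k \<gamma>) (restrict s0 {1..k}) (pre @ butlast w), length pre + length w)"
proof (induction m arbitrary: w)
  case 0
  have "last w \<notin> G i" using 0 by (metis disjoint_iff last_in_set)
  then have nT: "(last w, foldl (pgamma k \<gamma>) (restrict s0 {1..k}) (pre @ butlast w), F) \<notin> goal_states G i"
    by (simp add: goal_states_def)
  have eq: "length pre + length w = F" using 0 by simp
  have r: "reachv P A \<delta> G ((\<lambda>j w'. tstrat s0 \<gamma> Out j (pre @ w'))(i := \<tau>')) i w 0 = 0" using 0 by simp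
  show ?case unfolding r eq unfolding unfold0[OF nT] by simp
next
  case (Suc m)
  define \<rho> where "\<rho> = (\<lambda>j w'. tstrat s0 \<gamma> Out j (pre @ w'))(i := \<tau>')"
  define v where "v = last w"
  define sw where "sw = foldl (pgamma k \<gamma>) (restrict s0 {1..k}) (pre @ butlast w)"
  define c where "c = length pre + length w"
  define X where "X = (mc_states k S F :: ('v,'s) mcstate set)"
  define M where "M = gen_trans k P A \<delta> \<gamma> F (out_pi Out)"
  define T where "T = (goal_states G i :: ('v,'s) mcstate set)"
  define Y where "Y \<theta> = (\<Sum>v2\<in>UNIV. \<delta> v \<theta> v2 * mc_reach X M T F (v2, pgamma k \<gamma> sw v, c+1))" for \<theta>
  have vG: "v \<notin> G i" using Suc.prems unfolding v_def by (metis disjoint_iff last_in_set)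
  have nT: "(v, sw, c) \<notin> T" using vG by (simp add: goal_states_def T_def)
  have c: "c < F" using Suc.prems unfolding c_def by simp
  have c1: "1 \<le> c" using Suc.prems unfolding c_def by (cases w) auto
  have sw: "sw \<in> PiE {1..k} S" unfolding sw_def by (rule sof_PiE[OF trans])
  have xR: "(v,sw,c) \<in> Rset k P A \<delta> G s0 \<gamma> v0 i" using Suc.prems(4) unfolding v_def sw_def c_def .
  have xX: "(v,sw,c) \<in> X" unfolding X_def mc_states_def using sw c c1 by auto
  have RHS: "mc_reach X M T F (v,sw,c) = (\<Sum>\<theta>\<in>PiE (P v) A. jprob (P v) (out_pi Out (v,sw,c)) \<theta> * Y \<theta>)"
    unfolding X_def M_def Y_def T_def by (rule unfold_step[OF trans_facts[OF trans] sw c nT[unfolded T_def]])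
  have LHS: "reachv P A \<delta> G \<rho> i w (Suc m) =
    (\<Sum>\<theta>\<in>PiE (P v) A. jprob (P v) (\<lambda>j. \<rho> j w) \<theta> *
        (\<Sum>v'\<in>UNIV. \<delta> v \<theta> v' * reachv P A \<delta> G \<rho> i (w @ [v']) m))"
    using Suc.prems unfolding v_def by simp
  have rj: "\<rho> j w = Out j (sw j) v" if "j \<in> P v" "j \<noteq> i" for j
  proof -
    have j: "j \<in> {1..k}" using Pk that by blast
    show ?thesis using rho_eq[OF Suc.prems(1) j, of s0 \<gamma> Out pre] that unfolding \<rho>_def v_def sw_def by simp
  qed
  have le1: "reachv P A \<delta> G \<rho> i w (Suc m) \<le> (\<Sum>\<theta>\<in>PiE (P v) A. jprob (P v) (\<lambda>j. \<rho> j w) \<theta> * Y \<theta>)"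
    unfolding LHS Y_def
  proof (intro sum_mono mult_left_mono[OF _ jprob_nonneg])
    fix \<theta> v' assume th: "\<theta> \<in> PiE (P v) A"
    show "\<delta> v \<theta> v' * reachv P A \<delta> G \<rho> i (w @ [v']) m \<le> \<delta> v \<theta> v' * mc_reach X M T F (v', pgamma k \<gamma> sw v, c+1)"
    proof (cases "v' \<in> G i")
      case True
      then show ?thesis by (simp add: reachv_goal mc_reach_T goal_states_def T_def)
    next
      case False
      have d0: "0 \<le> \<delta> v \<theta> v'" using dnn th by blast
      show ?thesis
      proof (cases "\<delta> v \<theta> v' = 0")
        case True then show ?thesis by simp
      next
        case nz: False
        with d0 have dpos: "\<delta> v \<theta> v' > 0" by simp
        have fs: "foldl (pgamma k \<gamma>) (restrict s0 {1..k}) (pre @ butlast (w@[v'])) = pgamma k \<gamma> sw v"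
          using foldl_snoc[OF Suc.prems(1)] unfolding sw_def v_def by simp
        have R2: "(v', pgamma k \<gamma> sw v, c + 1) \<in> Rset k P A \<delta> G s0 \<gamma> v0 i"
          by (rule Rset.step[OF xR th dpos False])
        have "reachv P A \<delta> G \<rho> i (w @ [v']) m \<le>
          mc_reach X M T F (last (w@[v']), foldl (pgamma k \<gamma>) (restrict s0 {1..k}) (pre @ butlast (w@[v'])), length pre + length (w@[v']))"
        proof -
          have e: "(last (w@[v']), foldl (pgamma k \<gamma>) (restrict s0 {1..k}) (pre @ butlast (w@[v'])), length pre + length (w@[v'])) = (v', pgamma k \<gamma> sw v, c+1)"
            using fs unfolding c_def by simp
          have p1: "w @ [v'] \<noteq> []" by simp
          have p2: "set (w@[v']) \<inter> G i = {}" using Suc.prems(2) False by auto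
          have p3: "length pre + length (w@[v']) + m = F" using Suc.prems(3) by simp
          show ?thesis unfolding \<rho>_def X_def M_def T_def
            by (rule Suc.IH[OF p1 p2 p3 R2[folded e]])
        qed
        then have "reachv P A \<delta> G \<rho> i (w @ [v']) m \<le> mc_reach X M T F (v', pgamma k \<gamma> sw v, c+1)"
          unfolding fs c_def by simp
        then show ?thesis using d0 by (rule mult_left_mono)
      qed
    qed
  qed
  have goal: "(\<Sum>\<theta>\<in>PiE (P v) A. jprob (P v) (\<lambda>j. \<rho> j w) \<theta> * Y \<theta>) \<le> mc_reach X M T F (v,sw,c)"
  proof (cases "i \<in> P v")
    case False
    have "jprob (P v) (\<lambda>j. \<rho> j w) \<theta> = jprob (P v) (out_pi Out (v,sw,c)) \<theta>" for \<theta>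
    proof -
      have "\<rho> j w = Out j (sw j) v" if "j \<in> P v" for j using rj[OF that] that False by blast
      then show ?thesis unfolding jprob_def out_pi_def by (intro prod.cong refl) simp
    qed
    then show ?thesis unfolding RHS by simp
  next
    case True
    have finP: "finite (P v)" using Pk by (meson finite_atLeastAtMost finite_subset)
    have jq: "jprob (P v) (\<lambda>j. \<rho> j w) \<theta> = jprob (P v) ((out_pi Out (v,sw,c))(i := \<tau>' w)) \<theta>" for \<theta>
      unfolding jprob_def out_pi_def using rj by (intro prod.cong refl) (auto simp: \<rho>_def)
    have "(\<Sum>\<theta>\<in>PiE (P v) A. jprob (P v) (\<lambda>j. \<rho> j w) \<theta> * Y \<theta>) =
      (\<Sum>a\<in>A i. pmf (\<tau>' w) a * (\<Sum>\<theta>\<in>PiE (P v) A. jprob (P v) ((out_pi Out (v,sw,c))(i := return_pmf a)) \<theta> * Y \<theta>))"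
      unfolding jq by (rule jprob_split[of "P v" i A, OF finP True Ai])
    also have "\<dots> \<le> (\<Sum>a\<in>A i. pmf (\<tau>' w) a * mc_reach X M T F (v,sw,c))"
    proof (intro sum_mono mult_left_mono pmf_nonneg)
      fix a assume a: "a \<in> A i"
      define M' where "M' = gen_trans k P A \<delta> \<gamma> F (out_mod Out i a (v,sw,c))"
      have "mc_reach X M' T F (v,sw,c) = (\<Sum>\<theta>\<in>PiE (P v) A. jprob (P v) (out_mod Out i a (v,sw,c) (v,sw,c)) \<theta> *
        (\<Sum>v2\<in>UNIV. \<delta> v \<theta> v2 * mc_reach X M' T F (v2, pgamma k \<gamma> sw v, c+1)))"
        unfolding X_def M'_def T_def by (rule unfold_step[OF trans_facts[OF trans] sw c nT[unfolded T_def]])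
      also have "\<dots> = (\<Sum>\<theta>\<in>PiE (P v) A. jprob (P v) ((out_pi Out (v,sw,c))(i := return_pmf a)) \<theta> * Y \<theta>)"
      proof -
        have om: "out_mod Out i a (v,sw,c) (v,sw,c) = (out_pi Out (v,sw,c))(i := return_pmf a)"
          unfolding out_mod_def by simp
        have me: "mc_reach X M' T F (v2, pgamma k \<gamma> sw v, c+1) = mc_reach X M T F (v2, pgamma k \<gamma> sw v, c+1)" for v2
          unfolding X_def M'_def M_def by (rule mod_eq) simp
        show ?thesis unfolding om me Y_def ..
      qed
      finally have "(\<Sum>\<theta>\<in>PiE (P v) A. jprob (P v) ((out_pi Out (v,sw,c))(i := return_pmf a)) \<theta> * Y \<theta>) = mc_reach X M' T F (v,sw,c)" ..
      also have "\<dots> \<le> mc_reach X M T F (v,sw,c)"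
        using noimp xX True a xR unfolding X_def M'_def M_def T_def by blast
      finally show "(\<Sum>\<theta>\<in>PiE (P v) A. jprob (P v) ((out_pi Out (v,sw,c))(i := return_pmf a)) \<theta> * Y \<theta>) \<le> mc_reach X M T F (v,sw,c)" .
    qed
    also have "\<dots> = mc_reach X M T F (v,sw,c)"
      unfolding sum_distrib_right[symmetric] using sum_pmf_eq_1[OF Ai tau[rule_format]] by simp
    finally show ?thesis .
  qed
  from le1 goal show ?case unfolding \<rho>_def v_def sw_def c_def X_def M_def T_def by (rule order_trans)
qed

theorem mainTheorem5:
  fixes b k L F :: nat
    and v0 :: "'v::finite"
    and A :: "nat \<Rightarrow> 'a set"
    and P :: "'v \<Rightarrow> nat set"
    and \<delta> :: "'v \<Rightarrow> (nat \<Rightarrow> 'a) \<Rightarrow> 'v \<Rightarrow> real"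
    and G :: "nat \<Rightarrow> 'v set"
    and S :: "nat \<Rightarrow> 's set"
    and s0 :: "nat \<Rightarrow> 's"
    and \<gamma> :: "nat \<Rightarrow> 's \<Rightarrow> 'v \<Rightarrow> 's"
    and Out :: "nat \<Rightarrow> 's \<Rightarrow> 'v \<Rightarrow> 'a pmf"
  assumes game: "bounded_cgs b k A P \<delta> L"
    and trans: "transducers k A S s0 \<gamma> Out"
    and notSPE: "\<not> is_SPE k P A \<delta> G v0 F (tstrat s0 \<gamma> Out)"
  shows "\<exists>i\<in>{1..k}. \<exists>v s n. (v, s, n) \<in> mc_states k S F \<and> i \<in> P v \<and>
           (\<exists>a\<in>A i.
              (v, s, n) \<in> Rset k P A \<delta> G s0 \<gamma> v0 i \<and>
              reach_prob k S F (gen_trans k P A \<delta> \<gamma> F (out_mod Out i a (v, s, n)))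
                  (goal_states G i) (v, s, n)
              > reach_prob k S F (gen_trans k P A \<delta> \<gamma> F (out_pi Out))
                  (goal_states G i) (v, s, n))"
proof (rule ccontr)
  assume neg: "\<not> ?thesis"
  define \<sigma> where "\<sigma> = tstrat s0 \<gamma> Out"
  from notSPE obtain h where hist: "is_history P A \<delta> v0 F h"
      and nNE: "\<not> is_NE_sub k P A \<delta> G F h (substrat \<sigma> h)"
    unfolding is_SPE_def \<sigma>_def by blast
  from nNE obtain i \<tau>' where i: "i \<in> {1..k}" and str: "is_strategy A i \<tau>'"
    and gt: "subval P A \<delta> G F h ((substrat \<sigma> h)(i := \<tau>')) i > subval P A \<delta> G F h (substrat \<sigma> h) i"
    unfolding is_NE_sub_def by (auto simp: not_le)
  have hG: "set h \<inter> G i = {}" using gt unfolding subval_def by (auto split: if_splits)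
  have hne: "h \<noteq> []" and hd: "hd h = v0" and hlen: "length h \<le> F"
    and hcons: "\<forall>j. j + 1 < length h \<longrightarrow> (\<exists>\<theta>\<in>PiE (P (h ! j)) A. \<delta> (h ! j) \<theta> (h ! (j + 1)) > 0)"
    using hist unfolding is_history_def by auto
  define pre where "pre = butlast h"
  have sub: "substrat \<sigma> h = (\<lambda>j w'. tstrat s0 \<gamma> Out j (pre @ w'))" unfolding substrat_def \<sigma>_def pre_def ..
  have lenh: "length pre + length [last h] + (F - length h) = F" using hlen hne unfolding pre_def by simp
  have wG: "set [last h] \<inter> G i = {}" using hG hne by (auto dest: last_in_set)
  have Pk: "\<forall>v. P v \<subseteq> {1..k}" using game unfolding bounded_cgs_def by blast
  have Ai: "finite (A i)" using game i unfolding bounded_cgs_def by blast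
  have dnn: "\<forall>v \<theta> v'. \<theta> \<in> PiE (P v) A \<longrightarrow> 0 \<le> \<delta> v \<theta> v'" using game unfolding bounded_cgs_def by blast
  have tau: "\<forall>w. set_pmf (\<tau>' w) \<subseteq> A i" using str unfolding is_strategy_def .
  have noimp: "\<forall>v s n a. (v,s,n) \<in> mc_states k S F \<longrightarrow> i \<in> P v \<longrightarrow> a \<in> A i \<longrightarrow>
        (v,s,n) \<in> Rset k P A \<delta> G s0 \<gamma> v0 i \<longrightarrow>
        mc_reach (mc_states k S F) (gen_trans k P A \<delta> \<gamma> F (out_mod Out i a (v,s,n))) (goal_states G i) F (v,s,n)
        \<le> mc_reach (mc_states k S F) (gen_trans k P A \<delta> \<gamma> F (out_pi Out)) (goal_states G i) F (v,s,n)"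
  proof (intro allI impI)
    fix v s n a
    assume h1: "(v,s,n) \<in> mc_states k S F" "i \<in> P v" "a \<in> A i" "(v,s,n) \<in> Rset k P A \<delta> G s0 \<gamma> v0 i"
    show "mc_reach (mc_states k S F) (gen_trans k P A \<delta> \<gamma> F (out_mod Out i a (v,s,n))) (goal_states G i) F (v,s,n)
        \<le> mc_reach (mc_states k S F) (gen_trans k P A \<delta> \<gamma> F (out_pi Out)) (goal_states G i) F (v,s,n)"
    proof (rule ccontr)
      assume "\<not> ?thesis"
      then have "reach_prob k S F (gen_trans k P A \<delta> \<gamma> F (out_mod Out i a (v, s, n))) (goal_states G i) (v, s, n)
              > reach_prob k S F (gen_trans k P A \<delta> \<gamma> F (out_pi Out)) (goal_states G i) (v, s, n)"
        unfolding reach_prob_def by simp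
      with h1 i neg show False by blast
    qed
  qed
  have R0: "(last h, foldl (pgamma k \<gamma>) (restrict s0 {1..k}) (butlast h), length h) \<in> Rset k P A \<delta> G s0 \<gamma> v0 i"
    by (rule hist_R[of h v0 P A \<delta> G i k \<gamma> s0, OF hne hd hcons hG])
  have e: "(last [last h], foldl (pgamma k \<gamma>) (restrict s0 {1..k}) (pre @ butlast [last h]), length pre + length [last h])
     = (last h, foldl (pgamma k \<gamma>) (restrict s0 {1..k}) (butlast h), length h)"
    using hne unfolding pre_def by simp
  have ne1: "[last h] \<noteq> []" by simp
  have A: "reachv P A \<delta> G ((\<lambda>j w'. tstrat s0 \<gamma> Out j (pre @ w'))(i := \<tau>')) i [last h] (F - length h) \<le>
    mc_reach (mc_states k S F) (gen_trans k P A \<delta> \<gamma> F (out_pi Out)) (goal_states G i) F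
      (last [last h], foldl (pgamma k \<gamma>) (restrict s0 {1..k}) (pre @ butlast [last h]), length pre + length [last h])"
    by (rule claimA[OF trans Pk Ai tau dnn noimp ne1 wG lenh R0[folded e]])
  have B: "reachv P A \<delta> G (\<lambda>j w'. tstrat s0 \<gamma> Out j (pre @ w')) i [last h] (F - length h) =
    mc_reach (mc_states k S F) (gen_trans k P A \<delta> \<gamma> F (out_pi Out)) (goal_states G i) F
      (last [last h], foldl (pgamma k \<gamma>) (restrict s0 {1..k}) (pre @ butlast [last h]), length pre + length [last h])"
    by (rule claimB[where \<delta>=\<delta> and pre=pre and w="[last h]" and m="F - length h" and G=G and i=i and F=F, OF trans Pk ne1 wG lenh])
  have "subval P A \<delta> G F h ((substrat \<sigma> h)(i := \<tau>')) i \<le> subval P A \<delta> G F h (substrat \<sigma> h) i"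
    unfolding subval_def sub using hG A B by simp
  with gt show False by simp
qed

end
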